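(* For each $n\in\{3,4,5,6,7\}$, the N00N state $Q=\frac{1}{\sqrt2}\cdot\frac{1}{\sqrt{n!}}\big((a^\dagger_1)^n+(a^\dagger_2)^n\big)$ (i.e. $(|n,0\rangle+|0,n\rangle)/\sqrt2$) cannot be generated by vacuum heralding from the $(n-1)$-mode input $|2,1,\dots,1\rangle$: there is no complex $(n-1)\times(n-1)$ matrix $A$ and no $\gamma\in\mathbb{C}$ such that $\gamma G=Q$, where $G$ is obtained with input occupation numbers $(n_1,\dots,n_{n-1})=(2,1,\dots,1)$ and heralding pattern $(0,\dots,0)$ on the last $n-3$ modes.
   Context: Heralded linear-optical state generation model. States with a fixed photon number are homogeneous polynomials in commuting variables $a^\dagger_1,\dots,a^\dagger_N$ applied to the vacuum. Given $N$ modes, an arbitrary complex $N\times N$ matrix $A$ (not required to be unitary), and a Fock input $\prod_{i=1}^N\frac{1}{\sqrt{n_i!}}(a^\dagger_{i,\mathrm{in}})^{n_i}|0\rangle$, the output is $F|0\rangle$ with $F=\prod_{i=1}^N\frac{1}{\sqrt{n_i!}}\big(\sum_{j=1}^N A_{i,j}a^\dagger_j\big)^{n_i}$. Heralding the last $M$ modes on the pattern $(m_1,\dots,m_M)$, $m=\sum_jm_j$, gives $G=\frac{1}{\prod_jm_j!}\,\frac{\partial^{m}F}{\partial(a^\dagger_{N-M+1})^{m_1}\cdots\partial(a^\dagger_N)^{m_M}}\Big|_{a^\dagger_{N-M+1}=\cdots=a^\dagger_N=0}$; for the all-zero (vacuum) pattern this is just $F$ with $a^\dagger_{N-M+1},\dots,a^\dagger_N$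 set to $0$. $G$ and $Q$ are compared as polynomials in $a^\dagger_1,\dots,a^\dagger_{N-M}$. *)

theory Defs
  imports Complex_Main
begin

text \<open>Polynomials in the commuting creation operators are represented by their
  polynomial functions on complex points x :: nat \<Rightarrow> complex (mode j is
  the variable x j, modes indexed 0..N-1). Over the infinite field of complex
  numbers, equality of polynomials coincides with equality of these functions.\<close>

definition lo_output ::
  "nat \<Rightarrow> (nat \<Rightarrow> nat \<Rightarrow> complex) \<Rightarrow> (nat \<Rightarrow> nat) \<Rightarrow> (nat \<Rightarrow> complex) \<Rightarrow> complex" where
  "lo_output N A nn x =
     (\<Prod>i<N. complex_of_real (1 / sqrt (fact (nn i))) * (\<Sum>j<N. A i j * x j) ^ (nn i))"

definition vacuum_herald ::
  "nat \<Rightarrow> nat \<Rightarrow> (nat \<Rightarrow> nat \<Rightarrow> complex) \<Rightarrow> (nat \<Rightarrow> nat) \<Rightarrow> (nat \<Rightarrow> complex) \<Rightarrow> complex" where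
  "vacuum_herald N M A nn x = lo_output N A nn (\<lambda>j. if j < N - M then x j else 0)"

definition noon_state :: "nat \<Rightarrow> (nat \<Rightarrow> complex) \<Rightarrow> complex" where
  "noon_state n x = complex_of_real (1 / sqrt 2) * complex_of_real (1 / sqrt (fact n))
                    * (x 0 ^ n + x 1 ^ n)"

definition input_211 :: "nat \<Rightarrow> nat" where
  "input_211 i = (if i = 0 then 2 else 1)"

end

theory Submission
  imports Defs
begin

lemma step1:
  fixes K a b c :: complex and R :: "complex \<Rightarrow> complex \<Rightarrow> complex"
  assumes h: "\<And>x0 x1. K * (a*x0 + b*x1)^2 * R x0 x1 = c * (x0^n + x1^n)"
    and c: "c \<noteq> 0" and n: "n \<ge> 1"
    and cont: "\<And>y z. isCont (\<lambda>t. R t y) z"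
  shows "b = 0"
proof -
  have h0: "c * (b^n + (-a)^n) = 0" using h[of b "-a"] by (simp add: algebra_simps)
  have eq: "c * ((b+t)^n - b^n) = K * a^2 * t^2 * R (b+t) (-a)" for t
  proof -
    have "K * (a*(b+t) + b*(-a))^2 * R (b+t) (-a) = c * ((b+t)^n + (-a)^n)" by (rule h)
    moreover have "a*(b+t) + b*(-a) = a*t" by (simp add: algebra_simps)
    ultimately have "K * (a*t)^2 * R (b+t) (-a) = c * ((b+t)^n + (-a)^n)" by simp
    then show ?thesis using h0 by (simp add: algebra_simps power_mult_distrib)
  qed
  have D: "((\<lambda>x. x^n) has_field_derivative of_nat n * b^(n-1)) (at b)"
    using DERIV_power[OF DERIV_ident, of n b UNIV] by simp
  hence L1: "((\<lambda>t. ((b+t)^n - b^n)/t) \<longlongrightarrow> of_nat n * b^(n-1)) (at 0)"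
    by (simp add: DERIV_def)
  hence L2: "((\<lambda>t. c * (((b+t)^n - b^n)/t)) \<longlongrightarrow> c * (of_nat n * b^(n-1))) (at 0)"
    by (intro tendsto_intros)
  have ic: "isCont (\<lambda>t. K * a^2 * t * R (b+t) (-a)) 0"
  proof -
    have "isCont (\<lambda>t. R (b+t) (-a)) 0"
      by (rule isCont_o2[OF _ cont]) (intro continuous_intros)
    thus ?thesis by (intro continuous_intros)
  qed
  hence L3: "((\<lambda>t. K * a^2 * t * R (b+t) (-a)) \<longlongrightarrow> 0) (at 0)"
    using ic unfolding isCont_def by simp
  have ev: "\<forall>\<^sub>F t in at 0. c * (((b+t)^n - b^n)/t) = K * a^2 * t * R (b+t) (-a)"
    unfolding eventually_at_filter
  proof (rule always_eventually, intro allI impI)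
    fix t :: complex assume "t \<noteq> 0"
    have "c * (((b+t)^n - b^n)/t) = (c * ((b+t)^n - b^n))/t" by simp
    also have "\<dots> = (K * a^2 * t^2 * R (b+t) (-a))/t" by (simp only: eq)
    also have "\<dots> = K * a^2 * t * R (b+t) (-a)" using \<open>t \<noteq> 0\<close> by (simp add: power2_eq_square)
    finally show "c * (((b+t)^n - b^n)/t) = K * a^2 * t * R (b+t) (-a)" .
  qed
  have "c * (of_nat n * b^(n-1)) = 0"
    using tendsto_unique[OF _ L2 Lim_transform_eventually[OF L3 eventually_mono[OF ev]]] by (auto)
  thus ?thesis using c n by (cases "n = 1") auto
qed

lemma vh_form:
  assumes N: "N \<ge> 2"
  shows "vacuum_herald N (N-2) A input_211 x = complex_of_real (1 / sqrt 2) *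
     (A 0 0 * x 0 + A 0 1 * x 1)^2 * (\<Prod>i\<in>{1..<N}. A i 0 * x 0 + A i 1 * x 1)"
proof -
  have s: "(\<Sum>j<N. A i j * (if j < N - (N-2) then x j else 0)) = A i 0 * x 0 + A i 1 * x 1" for i
  proof -
    have "(\<Sum>j<N. A i j * (if j < N - (N-2) then x j else 0)) = (\<Sum>j<N. if j < 2 then A i j * x j else 0)"
      using N by (intro sum.cong) auto
    also have "\<dots> = (\<Sum>j\<in>{..<N} \<inter> {j. j < 2}. A i j * x j)"
      by (simp add: sum.inter_restrict)
    also have "{..<N} \<inter> {j. j < 2} = {0, 1}" using N by auto
    finally show ?thesis by simp
  qed
  have "{..<N} = insert 0 {1..<N}" using N by auto
  hence "vacuum_herald N (N-2) A input_211 x =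
     (complex_of_real (1 / sqrt (fact 2)) * (A 0 0 * x 0 + A 0 1 * x 1)^2) *
     (\<Prod>i\<in>{1..<N}. complex_of_real (1 / sqrt (fact 1)) * (A i 0 * x 0 + A i 1 * x 1) ^ 1)"
    unfolding vacuum_herald_def lo_output_def s
    by (simp add: input_211_def)
  thus ?thesis by simp
qed

theorem mainTheorem4:
  fixes n :: nat
  assumes "n \<in> {3,4,5,6,7}"
  shows "\<not> (\<exists>(A :: nat \<Rightarrow> nat \<Rightarrow> complex) (\<gamma> :: complex).
            \<forall>x :: nat \<Rightarrow> complex.
              \<gamma> * vacuum_herald (n - 1) (n - 3) A input_211 x = noon_state n x)"
proof
  assume "\<exists>(A :: nat \<Rightarrow> nat \<Rightarrow> complex) (\<gamma> :: complex).
            \<forall>x :: nat \<Rightarrow> complex.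
              \<gamma> * vacuum_herald (n - 1) (n - 3) A input_211 x = noon_state n x"
  then obtain A \<gamma> where H: "\<And>x. \<gamma> * vacuum_herald (n - 1) (n - 3) A input_211 x = noon_state n x"
    by blast
  have n3: "n \<ge> 3" using assms by auto
  define N where "N = n - 1"
  have N2: "N \<ge> 2" and e: "n - 3 = N - 2" using n3 by (auto simp: N_def)
  define K where "K = \<gamma> * complex_of_real (1 / sqrt 2)"
  define c where "c = complex_of_real (1 / sqrt 2) * complex_of_real (1 / sqrt (fact n))"
  define R where "R = (\<lambda>x0 x1. \<Prod>i\<in>{1..<N}. A i 0 * x0 + A i 1 * x1)"
  have c0: "c \<noteq> 0" unfolding c_def by simp
  have h: "K * (A 0 0 * x0 + A 0 1 * x1)^2 * R x0 x1 = c * (x0^n + x1^n)" for x0 x1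
  proof -
    have "\<gamma> * vacuum_herald N (N-2) A input_211 (\<lambda>j. if j = 0 then x0 else x1) =
          noon_state n (\<lambda>j. if j = 0 then x0 else x1)"
      using H e by (simp add: N_def)
    thus ?thesis unfolding vh_form[OF N2] noon_state_def K_def c_def R_def
      by (simp add: mult.assoc)
  qed
  have h2: "K * (A 0 1 * x0 + A 0 0 * x1)^2 * R x1 x0 = c * (x0^n + x1^n)" for x0 x1
    using h[of x1 x0] by (simp add: add.commute)
  have cont1: "isCont (\<lambda>t. R t y) z" for y z unfolding R_def by (intro continuous_intros)
  have cont2: "isCont (\<lambda>t. R y t) z" for y z unfolding R_def by (intro continuous_intros)
  have b0: "A 0 1 = 0" by (rule step1[OF h c0 _ cont1]) (use n3 in auto)
  have a0: "A 0 0 = 0" by (rule step1[OF h2 c0 _ cont2]) (use n3 in auto)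
  have "c * (1^n + 0^n) = 0" using h[of 1 0] a0 b0 by simp
  thus False using c0 n3 by (simp add: power_0_left)
qed

end
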